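(* Let $X=(X_1,X_2)$ be a two-good random valuation with $X_1,X_2$ independent. Then \[ \textsc{Rev}(X_1,X_2)\le\Big(\sqrt{\textsc{Rev}(X_1)}+\sqrt{\textsc{Rev}(X_2)}\Big)^2 . \]
   Context: A two-good random valuation is a random vector in $\mathbb{R}_+^2$. A mechanism is a pair $\mu=(q,s)$ of Borel functions $q:\mathbb{R}_+^2\to[0,1]^2$, $s:\mathbb{R}_+^2\to\mathbb{R}$, with buyer payoff $b(x)=q(x)\cdot x-s(x)$; IR: $b(x)\ge0$ for all $x$; IC: $b(x)\ge q(\tilde x)\cdot x-s(\tilde x)$ for all $x,\tilde x$. $\textsc{Rev}(X)=\sup\mathbb{E}[s(X)]$ over all IC and IR mechanisms; for one good, $\textsc{Rev}(X_i)=\sup_{p\ge0}p\,\mathbb{P}[X_i\ge p]$. *)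

theory Defs
  imports "HOL-Probability.Probability"
begin

definition nonneg2 :: "(real \<times> real) set" where
  "nonneg2 = {x. fst x \<ge> 0 \<and> snd x \<ge> 0}"

definition dot2 :: "real \<times> real \<Rightarrow> real \<times> real \<Rightarrow> real" where
  "dot2 a x = fst a * fst x + snd a * snd x"

definition IC_IR_mechanism :: "(real \<times> real \<Rightarrow> real \<times> real) \<Rightarrow> (real \<times> real \<Rightarrow> real) \<Rightarrow> bool" where
  "IC_IR_mechanism q s \<longleftrightarrow>
     q \<in> borel_measurable borel \<and> s \<in> borel_measurable borel \<and>
     (\<forall>x\<in>nonneg2. fst (q x) \<in> {0..1} \<and> snd (q x) \<in> {0..1}) \<and>
     (\<forall>x\<in>nonneg2. dot2 (q x) x - s x \<ge> 0) \<and>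
     (\<forall>x\<in>nonneg2. \<forall>y\<in>nonneg2. dot2 (q x) x - s x \<ge> dot2 (q y) x - s y)"

definition ext_expectation :: "'a measure \<Rightarrow> ('a \<Rightarrow> real) \<Rightarrow> ereal" where
  "ext_expectation M f =
     enn2ereal (\<integral>\<^sup>+ w. ennreal (f w) \<partial>M) - enn2ereal (\<integral>\<^sup>+ w. ennreal (- f w) \<partial>M)"

definition Rev2 :: "'a measure \<Rightarrow> ('a \<Rightarrow> real) \<Rightarrow> ('a \<Rightarrow> real) \<Rightarrow> ereal" where
  "Rev2 M X1 X2 = (SUP qs \<in> {(q, s). IC_IR_mechanism q s}.
                     ext_expectation M (\<lambda>w. snd qs (X1 w, X2 w)))"

definition Rev1 :: "'a measure \<Rightarrow> ('a \<Rightarrow> real) \<Rightarrow> ereal" where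
  "Rev1 M X = (SUP p \<in> {0..}. ereal (p * measure M {w \<in> space M. X w \<ge> p}))"

end

theory Submission
  imports Defs
begin


definition Bu :: "(real \<times> real \<Rightarrow> real \<times> real) \<Rightarrow> (real \<times> real \<Rightarrow> real) \<Rightarrow> real \<times> real \<Rightarrow> real" where
  "Bu q s x = dot2 (q x) x - s x"
definition P1 :: "(real \<times> real \<Rightarrow> real \<times> real) \<Rightarrow> (real \<times> real \<Rightarrow> real) \<Rightarrow> real \<times> real \<Rightarrow> real" where
  "P1 q s x = fst (q x) * fst x - (Bu q s x - Bu q s (0, snd x))"
definition P2 :: "(real \<times> real \<Rightarrow> real \<times> real) \<Rightarrow> (real \<times> real \<Rightarrow> real) \<Rightarrow> real \<times> real \<Rightarrow> real" where
  "P2 q s x = snd (q x) * snd x - (Bu q s x - Bu q s (fst x, 0))"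

lemma mech_IC:
  assumes "IC_IR_mechanism q s" "x \<in> nonneg2" "y \<in> nonneg2"
  shows "Bu q s x \<ge> fst (q y) * fst x + snd (q y) * snd x - s y"
  using assms unfolding IC_IR_mechanism_def Bu_def dot2_def by blast

lemma mech_IR:
  assumes "IC_IR_mechanism q s" "x \<in> nonneg2"
  shows "Bu q s x \<ge> 0"
  using assms unfolding IC_IR_mechanism_def Bu_def dot2_def by blast

lemma mech_q:
  assumes "IC_IR_mechanism q s" "x \<in> nonneg2"
  shows "0 \<le> fst (q x)" "fst (q x) \<le> 1" "0 \<le> snd (q x)" "snd (q x) \<le> 1"
  using assms unfolding IC_IR_mechanism_def by auto

lemma nonneg2_iff[simp]: "(a, c) \<in> nonneg2 \<longleftrightarrow> 0 \<le> a \<and> 0 \<le> c"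
  by (simp add: nonneg2_def)

lemma mech_pointwise:
  assumes m: "IC_IR_mechanism q s" and a: "0 \<le> a" and c: "0 \<le> c"
  shows "s (a, c) \<le> P1 q s (a, c) + P2 q s (a, c) + min a c"
    and "0 \<le> P1 q s (a, c)" and "P1 q s (a, c) \<le> a"
    and "0 \<le> P2 q s (a, c)" and "P2 q s (a, c) \<le> c"
proof -
  let ?B = "Bu q s"
  have Bx: "?B (a,c) = fst (q (a,c)) * a + snd (q (a,c)) * c - s (a,c)"
    by (simp add: Bu_def dot2_def)
  have B0c: "?B (0,c) = snd (q (0,c)) * c - s (0,c)" by (simp add: Bu_def dot2_def)
  have Ba0: "?B (a,0) = fst (q (a,0)) * a - s (a,0)" by (simp add: Bu_def dot2_def)
  have B00: "?B (0,0) = - s (0,0)" by (simp add: Bu_def dot2_def)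
  have i1: "?B (0,c) \<ge> snd (q (a,c)) * c - s (a,c)"
    using mech_IC[OF m, of "(0,c)" "(a,c)"] a c by simp
  have i2: "?B (a,c) \<ge> fst (q (0,c)) * a + snd (q (0,c)) * c - s (0,c)"
    using mech_IC[OF m, of "(a,c)" "(0,c)"] a c by simp
  have i3: "?B (a,0) \<ge> fst (q (a,c)) * a - s (a,c)"
    using mech_IC[OF m, of "(a,0)" "(a,c)"] a c by simp
  have i4: "?B (a,c) \<ge> fst (q (a,0)) * a + snd (q (a,0)) * c - s (a,0)"
    using mech_IC[OF m, of "(a,c)" "(a,0)"] a c by simp
  have i5: "?B (a,0) \<ge> fst (q (0,0)) * a - s (0,0)"
    using mech_IC[OF m, of "(a,0)" "(0,0)"] a c by simp
  have i6: "?B (0,c) \<ge> snd (q (0,0)) * c - s (0,0)"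
    using mech_IC[OF m, of "(0,c)" "(0,0)"] a c by simp
  have ir: "?B (0,0) \<ge> 0" using mech_IR[OF m, of "(0,0)"] by simp
  have q1: "fst (q (a,c)) * a \<le> a" "0 \<le> fst (q (a,c)) * a"
    using mech_q[OF m, of "(a,c)"] a c by (auto simp: mult_left_le_one_le)
  have q2: "snd (q (a,c)) * c \<le> c" "0 \<le> snd (q (a,c)) * c"
    using mech_q[OF m, of "(a,c)"] a c by (auto simp: mult_left_le_one_le)
  have q3: "0 \<le> fst (q (0,c)) * a" "0 \<le> snd (q (a,0)) * c" "0 \<le> fst (q (0,0)) * a" "0 \<le> snd (q (0,0)) * c"
    using mech_q[OF m, of "(0,c)"] mech_q[OF m, of "(a,0)"] mech_q[OF m, of "(0,0)"] a c by auto
  have P1e: "P1 q s (a,c) = fst (q (a,c)) * a - (?B (a,c) - ?B (0,c))" by (simp add: P1_def)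
  have P2e: "P2 q s (a,c) = snd (q (a,c)) * c - (?B (a,c) - ?B (a,0))" by (simp add: P2_def)
  show "0 \<le> P1 q s (a, c)" "P1 q s (a, c) \<le> a" "0 \<le> P2 q s (a, c)" "P2 q s (a, c) \<le> c"
    using P1e P2e Bx B0c Ba0 i1 i2 i3 i4 q1 q2 q3 by linarith+
  show "s (a, c) \<le> P1 q s (a, c) + P2 q s (a, c) + min a c"
    using P1e P2e Bx B0c Ba0 B00 i1 i2 i3 i4 i5 i6 ir q1 q2 q3 by (simp add: min_def)
qed

lemma mech_1d:
  assumes m: "IC_IR_mechanism q s" and y: "0 \<le> y" and yy: "y \<le> y'" and c: "0 \<le> c"
  shows "P1 q s (y', c) - P1 q s (y, c) \<le> (fst (q (y', c)) - fst (q (y, c))) * y'"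
    and "fst (q (y, c)) \<le> fst (q (y', c))"
    and "P2 q s (c, y') - P2 q s (c, y) \<le> (snd (q (c, y')) - snd (q (c, y))) * y'"
    and "snd (q (c, y)) \<le> snd (q (c, y'))"
proof -
  have y': "0 \<le> y'" using y yy by linarith
  let ?B = "Bu q s"
  have j1: "?B (y,c) \<ge> fst (q (y',c)) * y + snd (q (y',c)) * c - s (y',c)"
    using mech_IC[OF m, of "(y,c)" "(y',c)"] y y' c by simp
  have j2: "?B (y',c) \<ge> fst (q (y,c)) * y' + snd (q (y,c)) * c - s (y,c)"
    using mech_IC[OF m, of "(y',c)" "(y,c)"] y y' c by simp
  have e1: "?B (y,c) = fst (q (y,c)) * y + snd (q (y,c)) * c - s (y,c)"
       "?B (y',c) = fst (q (y',c)) * y' + snd (q (y',c)) * c - s (y',c)"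
    by (simp_all add: Bu_def dot2_def)
  have "(fst (q (y',c)) - fst (q (y,c))) * (y' - y) \<ge> 0"
    using j1 j2 e1 by (simp add: algebra_simps)
  then show "fst (q (y, c)) \<le> fst (q (y', c))"
    using yy by (cases "y = y'") (auto simp: zero_le_mult_iff)
  show "P1 q s (y', c) - P1 q s (y, c) \<le> (fst (q (y', c)) - fst (q (y, c))) * y'"
    using j2 e1 by (simp add: P1_def algebra_simps)
  have k1: "?B (c,y) \<ge> fst (q (c,y')) * c + snd (q (c,y')) * y - s (c,y')"
    using mech_IC[OF m, of "(c,y)" "(c,y')"] y y' c by simp
  have k2: "?B (c,y') \<ge> fst (q (c,y)) * c + snd (q (c,y)) * y' - s (c,y)"
    using mech_IC[OF m, of "(c,y')" "(c,y)"] y y' c by simp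
  have e2: "?B (c,y) = fst (q (c,y)) * c + snd (q (c,y)) * y - s (c,y)"
       "?B (c,y') = fst (q (c,y')) * c + snd (q (c,y')) * y' - s (c,y')"
    by (simp_all add: Bu_def dot2_def)
  have "(snd (q (c,y')) - snd (q (c,y))) * (y' - y) \<ge> 0"
    using k1 k2 e2 by (simp add: algebra_simps)
  then show "snd (q (c, y)) \<le> snd (q (c, y'))"
    using yy by (cases "y = y'") (auto simp: zero_le_mult_iff)
  show "P2 q s (c, y') - P2 q s (c, y) \<le> (snd (q (c, y')) - snd (q (c, y))) * y'"
    using k2 e2 by (simp add: P2_def algebra_simps)
qed



lemma exists_least_above:
  fixes g \<rho> y :: real
  assumes "0 < g" "1 < \<rho>" "g \<le> y"
  shows "\<exists>m. g * \<rho> ^ m \<le> y \<and> y < g * \<rho> ^ Suc m"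
proof -
  obtain N where N: "y / g < \<rho> ^ N" using real_arch_pow[OF assms(2)] by blast
  hence "y < g * \<rho> ^ N" using assms by (simp add: field_simps)
  hence ex: "\<exists>N. y < g * \<rho> ^ N" by blast
  define n where "n = (LEAST N. y < g * \<rho> ^ N)"
  have n1: "y < g * \<rho> ^ n" unfolding n_def by (rule LeastI_ex[OF ex])
  have n2: "\<And>k. k < n \<Longrightarrow> \<not> y < g * \<rho> ^ k" unfolding n_def using not_less_Least by blast
  have "n \<noteq> 0" using n1 assms by (auto intro: ccontr)
  then obtain m where "n = Suc m" by (cases n) auto
  thus ?thesis using n1 n2[of m] by (auto simp del: power_Suc intro!: exI[of _ m])
qed

lemma L1:
  fixes D :: "real measure" and p q :: "real \<Rightarrow> real" and r :: real
  assumes D: "prob_space D" "sets D = sets borel" and ae: "AE x in D. 0 \<le> x"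
    and tail: "\<And>y. 0 \<le> y \<Longrightarrow> y * measure D {y..} \<le> r"
    and pinc: "\<And>y y'. 0 \<le> y \<Longrightarrow> y \<le> y' \<Longrightarrow> p y' - p y \<le> (q y' - q y) * y'"
    and qmono: "\<And>y y'. 0 \<le> y \<Longrightarrow> y \<le> y' \<Longrightarrow> q y \<le> q y'"
    and qb: "\<And>y. 0 \<le> y \<Longrightarrow> 0 \<le> q y \<and> q y \<le> 1"
    and pb: "\<And>y. 0 \<le> y \<Longrightarrow> p y \<le> y"
  shows "(\<integral>\<^sup>+ x. ennreal (p x) \<partial>D) \<le> ennreal r"
proof -
  interpret prob_space D by fact
  have r0: "0 \<le> r" using tail[of 0] by simp
  show ?thesis
  proof (rule ennreal_le_epsilon)
    fix e :: real assume e: "0 < e"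
    define g where "g = e / 2"
    define \<delta> where "\<delta> = e / (2 * (r + 1))"
    define \<rho> where "\<rho> = 1 + \<delta>"
    have g: "0 < g" and \<delta>: "0 < \<delta>" and \<rho>: "1 < \<rho>" using e r0 by (auto simp: g_def \<delta>_def \<rho>_def)
    define G where "G k = g * \<rho> ^ k" for k
    define \<Delta> where "\<Delta> k = q (G (Suc k)) - q (G k)" for k
    have G0: "0 < G k" for k using g \<rho> by (simp add: G_def)
    have Gmono: "G k \<le> G n" if "k \<le> n" for k n
      using that g \<rho> by (simp add: G_def power_increasing)
    have GS: "G (Suc k) = \<rho> * G k" for k by (simp add: G_def)
    have \<Delta>0: "0 \<le> \<Delta> k" for k unfolding \<Delta>_def
      using qmono[of "G k" "G (Suc k)"] G0[of k] Gmono[of k "Suc k"] by simp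
    have R1: "p (G n) \<le> g + \<rho> * (\<Sum>k<n. \<Delta> k * G k)" for n
    proof (induction n)
      case 0 then show ?case using pb[of g] g by (simp add: G_def)
    next
      case (Suc n)
      have "p (G (Suc n)) - p (G n) \<le> \<Delta> n * G (Suc n)"
        using pinc[of "G n" "G (Suc n)"] G0[of n] Gmono[of n "Suc n"] by (simp add: \<Delta>_def)
      then show ?case using Suc GS[of n] by (simp add: algebra_simps)
    qed
    have R2: "\<exists>n. p y \<le> g + \<rho> * (\<Sum>k<n. \<Delta> k * G k) \<and> (\<forall>k<n. G k \<le> y)" if y: "0 \<le> y" for y
    proof (cases "y < g")
      case True then show ?thesis using pb[OF y] by (intro exI[of _ 0]) simp
    next
      case False
      then obtain m where m: "G m \<le> y" "y < G (Suc m)"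
        using exists_least_above[OF g \<rho>, of y] by (auto simp: G_def)
      have "p y - p (G m) \<le> (q y - q (G m)) * y" using pinc[of "G m" y] m G0[of m] by simp
      also have "\<dots> \<le> \<Delta> m * G (Suc m)"
      proof (rule mult_mono)
        show "q y - q (G m) \<le> \<Delta> m" unfolding \<Delta>_def
          using qmono[of y "G (Suc m)"] m y by simp
      qed (use m y \<Delta>0 in auto)
      finally have "p y \<le> g + \<rho> * (\<Sum>k<Suc m. \<Delta> k * G k)"
        using R1[of m] GS[of m] by (simp add: algebra_simps)
      moreover have "\<forall>k<Suc m. G k \<le> y" using Gmono m(1) by (meson order_trans less_Suc_eq_le)
      ultimately show ?thesis by blast
    qed
    define F where "F x = ennreal g + ennreal \<rho> * (\<Sum>k. ennreal (\<Delta> k * G k) * indicator {G k..} x)" for x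
    have pw: "ennreal (p x) \<le> F x" if x: "0 \<le> x" for x
    proof -
      obtain n where n: "p x \<le> g + \<rho> * (\<Sum>k<n. \<Delta> k * G k)" "\<forall>k<n. G k \<le> x"
        using R2[OF x] by blast
      have s0: "0 \<le> (\<Sum>k<n. \<Delta> k * G k)" using \<Delta>0 G0 by (intro sum_nonneg) (simp add: less_imp_le)
      have "ennreal (p x) \<le> ennreal (g + \<rho> * (\<Sum>k<n. \<Delta> k * G k))" using n(1) by (rule ennreal_leI)
      also have "\<dots> = ennreal g + ennreal \<rho> * (\<Sum>k<n. ennreal (\<Delta> k * G k))"
        using g \<rho> s0 \<Delta>0 G0 by (subst sum_ennreal) (auto simp: ennreal_plus ennreal_mult less_imp_le)
      also have "(\<Sum>k<n. ennreal (\<Delta> k * G k)) = (\<Sum>k<n. ennreal (\<Delta> k * G k) * indicator {G k..} x)"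
        using n(2) by (intro sum.cong) auto
      also have "\<dots> \<le> (\<Sum>k. ennreal (\<Delta> k * G k) * indicator {G k..} x)"
        by (rule sum_le_suminf) auto
      finally show ?thesis unfolding F_def by (simp add: mult_left_mono add_left_mono)
    qed
    have "(\<integral>\<^sup>+ x. ennreal (p x) \<partial>D) \<le> (\<integral>\<^sup>+ x. F x \<partial>D)"
      using ae by (intro nn_integral_mono_AE) (auto elim!: eventually_mono intro: pw)
    also have "\<dots> = ennreal g + ennreal \<rho> * (\<Sum>k. ennreal (\<Delta> k * G k) * emeasure D {G k..})"
    proof -
      have meas: "{G k..} \<in> sets D" for k using D(2) by simp
      have "(\<integral>\<^sup>+ x. F x \<partial>D) = (\<integral>\<^sup>+ x. ennreal g \<partial>D) +
          (\<integral>\<^sup>+ x. ennreal \<rho> * (\<Sum>k. ennreal (\<Delta> k * G k) * indicator {G k..} x) \<partial>D)"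
        unfolding F_def using meas by (intro nn_integral_add) (auto simp: measurable_cong_sets[OF D(2) refl])
      also have "(\<integral>\<^sup>+ x. ennreal \<rho> * (\<Sum>k. ennreal (\<Delta> k * G k) * indicator {G k..} x) \<partial>D)
          = ennreal \<rho> * (\<integral>\<^sup>+ x. (\<Sum>k. ennreal (\<Delta> k * G k) * indicator {G k..} x) \<partial>D)"
        using meas by (intro nn_integral_cmult) (auto simp: measurable_cong_sets[OF D(2) refl])
      also have "(\<integral>\<^sup>+ x. (\<Sum>k. ennreal (\<Delta> k * G k) * indicator {G k..} x) \<partial>D)
          = (\<Sum>k. \<integral>\<^sup>+ x. ennreal (\<Delta> k * G k) * indicator {G k..} x \<partial>D)"
        using meas by (intro nn_integral_suminf[of "\<lambda>k x. ennreal (\<Delta> k * G k) * indicator {G k..} x"]) (auto simp: measurable_cong_sets[OF D(2) refl])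
      also have "\<dots> = (\<Sum>k. ennreal (\<Delta> k * G k) * emeasure D {G k..})"
        using meas by (simp add: nn_integral_cmult_indicator)
      finally show ?thesis by (simp add: emeasure_space_1)
    qed
    also have "\<dots> \<le> ennreal g + ennreal \<rho> * (\<Sum>k. ennreal r * ennreal (\<Delta> k))"
    proof -
      have "ennreal (\<Delta> k * G k) * emeasure D {G k..} \<le> ennreal r * ennreal (\<Delta> k)" for k
      proof -
        have "ennreal (\<Delta> k * G k) * emeasure D {G k..} = ennreal (\<Delta> k * (G k * measure D {G k..}))"
          using \<Delta>0[of k] G0[of k] by (simp add: emeasure_eq_measure ennreal_mult[symmetric] mult.assoc)
        also have "\<dots> \<le> ennreal (\<Delta> k * r)"
          using tail[of "G k"] G0[of k] \<Delta>0[of k] by (intro ennreal_leI mult_left_mono) auto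
        finally show ?thesis using r0 \<Delta>0[of k] by (simp add: ennreal_mult mult.commute)
      qed
      then show ?thesis by (intro add_left_mono mult_left_mono suminf_le) auto
    qed
    also have "\<dots> \<le> ennreal g + ennreal \<rho> * ennreal r"
    proof -
      have "(\<Sum>k. ennreal (\<Delta> k)) \<le> 1"
      proof (subst suminf_eq_SUP, rule SUP_least)
        fix n
        have "(\<Sum>k<n. ennreal (\<Delta> k)) = ennreal (\<Sum>k<n. \<Delta> k)"
          using \<Delta>0 by simp
        also have "(\<Sum>k<n. \<Delta> k) = q (G n) - q (G 0)"
          unfolding \<Delta>_def by (rule sum_lessThan_telescope)
        also have "\<dots> \<le> 1" using qb[of "G n"] qb[of "G 0"] G0[of n] G0[of 0] by simp
        finally show "(\<Sum>k<n. ennreal (\<Delta> k)) \<le> 1" by (simp add: ennreal_leI)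
      qed
      hence "(\<Sum>k. ennreal r * ennreal (\<Delta> k)) \<le> ennreal r"
        proof (subst ennreal_suminf_cmult)
          assume h: "(\<Sum>k. ennreal (\<Delta> k)) \<le> 1"
          show "ennreal r * (\<Sum>i. ennreal (\<Delta> i)) \<le> ennreal r"
            using mult_left_mono[OF h, of "ennreal r"] by simp
        qed
      then show ?thesis by (intro add_left_mono mult_left_mono) auto
    qed
    also have "\<dots> = ennreal (g + \<rho> * r)" using g \<rho> r0 by (simp add: ennreal_plus ennreal_mult)
    also have "\<dots> \<le> ennreal r + ennreal e"
    proof -
      have "r / (r + 1) \<le> 1" using r0 by simp
      moreover have "\<delta> * r = (e / 2) * (r / (r + 1))" unfolding \<delta>_def by simp
      ultimately have "\<delta> * r \<le> e / 2" using e r0 by (metis mult_left_le half_gt_zero less_imp_le)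
      hence "g + \<rho> * r \<le> r + e" unfolding g_def \<rho>_def by (simp add: algebra_simps)
      hence "ennreal (g + \<rho> * r) \<le> ennreal (r + e)" by (rule ennreal_leI)
      thus ?thesis using r0 e by (simp add: ennreal_plus)
    qed
    finally show "(\<integral>\<^sup>+ x. ennreal (p x) \<partial>D) \<le> ennreal r + ennreal e" .
  qed
qed



lemma le_mult_self: "0 \<le> (x::real) \<Longrightarrow> 1 \<le> r \<Longrightarrow> x \<le> r * x"
  using mult_right_mono[of 1 r x] by simp

lemma Phi_step:
  fixes a \<delta> m1 m2 r1 r2 s :: real and \<Phi> :: "real \<Rightarrow> real"
  assumes a: "0 < a" and d: "0 < \<delta>" and m: "0 \<le> m1" "m1 \<le> 1" "0 \<le> m2" "m2 \<le> 1"
    and am: "a * m1 \<le> r1" "a * m2 \<le> r2" and s: "0 \<le> s" "s * s = r1 * r2"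
    and Phi: "\<And>t. \<Phi> t = (if t \<le> s then t else 2 * s - r1 * r2 / t)"
  shows "\<delta> * a * m1 * m2 \<le> (1 + \<delta>)^2 * (\<Phi> ((1 + \<delta>) * a) - \<Phi> a)"
proof -
  define \<rho> where "\<rho> = 1 + \<delta>"
  define b where "b = \<rho> * a"
  define c where "c = r1 * r2"
  have \<rho>: "1 < \<rho>" using d by (simp add: \<rho>_def)
  have b: "a < b" using a \<rho> by (simp add: b_def)
  have bd: "b - a = \<delta> * a" by (simp add: b_def \<rho>_def algebra_simps)
  have mm: "m1 * m2 \<le> 1" "0 \<le> m1 * m2" using m by (auto simp: mult_le_one)
  have L1: "\<delta> * a * m1 * m2 \<le> \<delta> * a"
    using mult_left_mono[OF mm(1), of "\<delta> * a"] a d by (simp add: mult.assoc)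
  have "a * m1 * (a * m2) \<le> r1 * r2"
    using mult_mono[OF am(1) am(2)] am m a by (simp add: mult_nonneg_nonneg order_trans[OF mult_nonneg_nonneg am(1)])
  hence amm: "a * a * (m1 * m2) \<le> c" by (simp add: c_def algebra_simps)
  have L2: "\<delta> * a * m1 * m2 \<le> \<delta> * c / a"
  proof -
    have "\<delta> * a * m1 * m2 = \<delta> * (a * a * (m1 * m2)) / a" using a by (simp add: field_simps)
    also have "\<dots> \<le> \<delta> * c / a" using amm a d by (intro divide_right_mono mult_left_mono) auto
    finally show ?thesis .
  qed
  have \<rho>2: "1 \<le> \<rho>^2" using \<rho> by (simp add: one_le_power)
  have goal_eq: "(1 + \<delta>)^2 * (\<Phi> ((1 + \<delta>) * a) - \<Phi> a) = \<rho>^2 * (\<Phi> b - \<Phi> a)"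
    by (simp add: \<rho>_def b_def)
  consider "b \<le> s" | "s \<le> a" | "a < s" "s < b" by linarith
  then show ?thesis
  proof cases
    case 1
    hence "\<Phi> b = b" "\<Phi> a = a" using b by (auto simp: Phi)
    hence "\<rho>^2 * (\<Phi> b - \<Phi> a) = \<rho>^2 * (\<delta> * a)" using bd by simp
    also have "\<dots> \<ge> \<delta> * a" using mult_right_mono[OF \<rho>2, of "\<delta> * a"] a d by simp
    finally show ?thesis using L1 goal_eq by linarith
  next
    case 2
    have Pa: "\<Phi> a = 2 * s - c / a"
    proof (cases "a \<le> s")
      case True
      hence "a = s" using 2 by simp
      hence "c / a = s" using s a by (simp add: c_def field_simps)
      thus ?thesis using True \<open>a = s\<close> by (simp add: Phi)
    qed (simp add: Phi c_def)
    have Pb: "\<Phi> b = 2 * s - c / b" using 2 b by (simp add: Phi c_def)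
    have "\<Phi> b - \<Phi> a = c / a - c / b" using Pa Pb by simp
    also have "\<dots> = c * \<delta> / (\<rho> * a)"
    proof -
      have "\<rho> * a \<noteq> 0" using a \<rho> by simp
      thus ?thesis using a unfolding b_def by (simp add: field_simps \<rho>_def)
    qed
    finally have e: "\<rho>^2 * (\<Phi> b - \<Phi> a) = \<rho> * (\<delta> * c / a)"
      using a \<rho> by (simp add: power2_eq_square field_simps)
    have c0: "0 \<le> c" unfolding c_def using s(2)[symmetric] by simp
    have "\<delta> * c / a \<le> \<rho> * (\<delta> * c / a)"
      using \<rho> c0 a d by (intro le_mult_self) simp_all
    thus ?thesis using L2 e goal_eq by linarith
  next
    case 3
    have Pa: "\<Phi> a = a" using 3 by (simp add: Phi)
    have Pb: "\<Phi> b = 2 * s - c / b" using 3 by (simp add: Phi c_def)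
    have key: "b * (2 * s - c / b - a) - b * (\<delta> * a / \<rho>) = (s - a) * (b - s) + \<delta> * a * (s - a)"
    proof -
      have e1: "b * (c / b) = s * s" using b a s(2) by (simp add: c_def)
      have e2: "b * (\<delta> * a / \<rho>) = \<delta> * a * a" using \<rho> by (simp add: b_def)
      have "b * (2 * s - c / b - a) - b * (\<delta> * a / \<rho>) = 2 * s * b - s * s - a * b - \<delta> * a * a"
        using e1 e2 by (simp add: algebra_simps)
      also have "\<dots> = (s - a) * (b - s) + \<delta> * a * (s - a)"
        by (simp add: b_def \<rho>_def algebra_simps)
      finally show ?thesis .
    qed
    have "0 \<le> (s - a) * (b - s) + \<delta> * a * (s - a)" using 3 a d by (intro add_nonneg_nonneg) auto
    hence "b * (\<delta> * a / \<rho>) \<le> b * (2 * s - c / b - a)" using key by linarith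
    hence h: "\<delta> * a / \<rho> \<le> 2 * s - c / b - a" using b a by (subst (asm) mult_le_cancel_left_pos) auto
    have "\<delta> * a = \<rho> * (\<delta> * a / \<rho>)" using \<rho> by simp
    also have "\<dots> \<le> \<rho> * (\<rho> * (\<delta> * a / \<rho>))" using \<rho> a d
      by (intro le_mult_self) simp_all
    also have "\<dots> \<le> \<rho> * (\<rho> * (2 * s - c / b - a))" using h \<rho> by (intro mult_left_mono) auto
    also have "\<dots> = \<rho>^2 * (\<Phi> b - \<Phi> a)" using Pa Pb by (simp add: power2_eq_square)
    finally show ?thesis using L1 goal_eq by linarith
  qed
qed



lemma L2:
  fixes D1 D2 :: "real measure" and r1 r2 :: real
  assumes D1: "prob_space D1" "sets D1 = sets borel" and D2: "prob_space D2" "sets D2 = sets borel"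
    and tail1: "\<And>y. 0 \<le> y \<Longrightarrow> y * measure D1 {y..} \<le> r1"
    and tail2: "\<And>y. 0 \<le> y \<Longrightarrow> y * measure D2 {y..} \<le> r2"
  shows "(\<integral>\<^sup>+ x. ennreal (min (fst x) (snd x)) \<partial>(D1 \<Otimes>\<^sub>M D2)) \<le> ennreal (2 * sqrt (r1 * r2))"
proof -
  interpret P1: prob_space D1 by fact
  interpret P2: prob_space D2 by fact
  interpret P12: pair_sigma_finite D1 D2 by unfold_locales
  have r10: "0 \<le> r1" using tail1[of 0] by simp
  have r20: "0 \<le> r2" using tail2[of 0] by simp
  define s where "s = sqrt (r1 * r2)"
  have s0: "0 \<le> s" and ss: "s * s = r1 * r2" using r10 r20 by (simp_all add: s_def)
  define \<Phi> where "\<Phi> t = (if t \<le> s then t else 2 * s - r1 * r2 / t)" for t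
  have Phib: "0 \<le> \<Phi> t \<and> \<Phi> t \<le> 2 * s" if "0 \<le> t" for t
  proof (cases "t \<le> s")
    case True thus ?thesis using that s0 by (simp add: \<Phi>_def)
  next
    case False
    hence t: "0 < t" "s < t" using s0 by auto
    have "r1 * r2 / t \<le> s"
    proof -
      have "r1 * r2 = s * s" using ss by simp
      also have "\<dots> \<le> s * t" using t s0 by (intro mult_left_mono) auto
      finally show ?thesis using t by (simp add: divide_le_eq)
    qed
    moreover have "0 \<le> r1 * r2 / t" using r10 r20 t by simp
    ultimately show ?thesis using False by (simp add: \<Phi>_def)
  qed
  show ?thesis
  proof (rule ennreal_le_epsilon)
    fix e :: real assume e: "0 < e"
    define g where "g = e / 2"
    define \<delta> where "\<delta> = min 1 (e / (12 * (s + 1)))"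
    define \<rho> where "\<rho> = 1 + \<delta>"
    have g: "0 < g" and \<delta>: "0 < \<delta>" "\<delta> \<le> 1" and \<rho>: "1 < \<rho>"
      using e s0 by (auto simp: g_def \<delta>_def \<rho>_def)
    define G where "G k = g * \<rho> ^ k" for k
    have G0: "0 < G k" for k using g \<rho> by (simp add: G_def)
    have Gmono: "G k \<le> G n" if "k \<le> n" for k n
      using that g \<rho> by (simp add: G_def power_increasing)
    have GS: "G (Suc k) = (1 + \<delta>) * G k" for k by (simp add: G_def \<rho>_def)
    have Gsum: "G n = g + \<delta> * (\<Sum>k<n. G k)" for n
      by (induction n) (auto simp: G_def \<rho>_def algebra_simps)
    define m1 where "m1 k = measure D1 {G k..}" for k
    define m2 where "m2 k = measure D2 {G k..}" for k
    have m1b: "0 \<le> m1 k" "m1 k \<le> 1" "G k * m1 k \<le> r1" for k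
      using tail1[of "G k"] G0[of k] by (auto simp: m1_def)
    have m2b: "0 \<le> m2 k" "m2 k \<le> 1" "G k * m2 k \<le> r2" for k
      using tail2[of "G k"] G0[of k] by (auto simp: m2_def)
    have step: "\<delta> * G k * m1 k * m2 k \<le> \<rho>^2 * (\<Phi> (G (Suc k)) - \<Phi> (G k))" for k
      using Phi_step[OF G0[of k] \<delta>(1) m1b(1,2) m2b(1,2) m1b(3) m2b(3) s0 ss, of \<Phi>]
      by (simp add: \<Phi>_def GS \<rho>_def)
    have step0: "0 \<le> \<rho>^2 * (\<Phi> (G (Suc k)) - \<Phi> (G k))" for k
      using step[of k] \<delta> G0[of k] m1b(1)[of k] m2b(1)[of k] by (smt (verit) mult_nonneg_nonneg)
    define F where "F x = ennreal g + ennreal \<delta> * (\<Sum>k. ennreal (G k) * indicator ({G k..} \<times> {G k..}) x)" for x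
    have pw: "ennreal (min (fst x) (snd x)) \<le> F x" for x
    proof (cases "min (fst x) (snd x) < g")
      case True
      hence "ennreal (min (fst x) (snd x)) \<le> ennreal g" by (intro ennreal_leI) simp
      thus ?thesis unfolding F_def by (simp add: add_increasing2)
    next
      case False
      hence "g \<le> min (fst x) (snd x)" by linarith
      from exists_least_above[OF g \<rho> this] obtain m where m: "G m \<le> min (fst x) (snd x)" "min (fst x) (snd x) < G (Suc m)"
        unfolding G_def by blast
      have ind: "\<forall>k<Suc m. G k \<le> min (fst x) (snd x)" using Gmono m(1) by (meson order_trans less_Suc_eq_le)
      have "ennreal (min (fst x) (snd x)) \<le> ennreal (g + \<delta> * (\<Sum>k<Suc m. G k))"
        using m(2) Gsum[of "Suc m"] by (intro ennreal_leI) simp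
      also have "\<dots> = ennreal g + ennreal \<delta> * (\<Sum>k<Suc m. ennreal (G k))"
        using g \<delta> G0 by (subst sum_ennreal) (auto simp: ennreal_plus ennreal_mult less_imp_le sum_nonneg)
      also have "(\<Sum>k<Suc m. ennreal (G k)) = (\<Sum>k<Suc m. ennreal (G k) * indicator ({G k..} \<times> {G k..}) x)"
        using ind by (intro sum.cong) (auto simp: indicator_def mem_Times_iff)
      also have "\<dots> \<le> (\<Sum>k. ennreal (G k) * indicator ({G k..} \<times> {G k..}) x)"
        by (rule sum_le_suminf) auto
      finally show ?thesis unfolding F_def by (simp add: mult_left_mono add_left_mono)
    qed
    have meas: "{G k..} \<times> {G k..} \<in> sets (D1 \<Otimes>\<^sub>M D2)" for k
      using D1(2) D2(2) by (intro pair_measureI) auto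
    have "(\<integral>\<^sup>+ x. ennreal (min (fst x) (snd x)) \<partial>(D1 \<Otimes>\<^sub>M D2)) \<le> (\<integral>\<^sup>+ x. F x \<partial>(D1 \<Otimes>\<^sub>M D2))"
      by (intro nn_integral_mono pw)
    also have "\<dots> = ennreal g + ennreal \<delta> * (\<Sum>k. ennreal (G k) * emeasure (D1 \<Otimes>\<^sub>M D2) ({G k..} \<times> {G k..}))"
    proof -
      have mm: "(\<lambda>x. ennreal (G k) * indicator ({G k..} \<times> {G k..}) x) \<in> borel_measurable (D1 \<Otimes>\<^sub>M D2)" for k
        using meas[of k] by measurable
      have "(\<integral>\<^sup>+ x. F x \<partial>(D1 \<Otimes>\<^sub>M D2)) = (\<integral>\<^sup>+ x. ennreal g \<partial>(D1 \<Otimes>\<^sub>M D2)) +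
          (\<integral>\<^sup>+ x. ennreal \<delta> * (\<Sum>k. ennreal (G k) * indicator ({G k..} \<times> {G k..}) x) \<partial>(D1 \<Otimes>\<^sub>M D2))"
        unfolding F_def using mm by (intro nn_integral_add) auto
      also have "(\<integral>\<^sup>+ x. ennreal \<delta> * (\<Sum>k. ennreal (G k) * indicator ({G k..} \<times> {G k..}) x) \<partial>(D1 \<Otimes>\<^sub>M D2))
          = ennreal \<delta> * (\<integral>\<^sup>+ x. (\<Sum>k. ennreal (G k) * indicator ({G k..} \<times> {G k..}) x) \<partial>(D1 \<Otimes>\<^sub>M D2))"
        using mm by (intro nn_integral_cmult) auto
      also have "(\<integral>\<^sup>+ x. (\<Sum>k. ennreal (G k) * indicator ({G k..} \<times> {G k..}) x) \<partial>(D1 \<Otimes>\<^sub>M D2))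
          = (\<Sum>k. \<integral>\<^sup>+ x. ennreal (G k) * indicator ({G k..} \<times> {G k..}) x \<partial>(D1 \<Otimes>\<^sub>M D2))"
        using mm by (intro nn_integral_suminf[of "\<lambda>k x. ennreal (G k) * indicator ({G k..} \<times> {G k..}) x"])
      also have "\<dots> = (\<Sum>k. ennreal (G k) * emeasure (D1 \<Otimes>\<^sub>M D2) ({G k..} \<times> {G k..}))"
        using meas by (simp add: nn_integral_cmult_indicator)
      also have "(\<integral>\<^sup>+ x. ennreal g \<partial>(D1 \<Otimes>\<^sub>M D2)) = ennreal g"
      proof -
        interpret PP: pair_prob_space D1 D2 by unfold_locales
        show ?thesis by (simp add: PP.emeasure_space_1)
      qed
      finally show ?thesis by simp
    qed
    also have "\<dots> = ennreal g + (\<Sum>k. ennreal (\<delta> * G k * m1 k * m2 k))"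
    proof -
      have "ennreal (G k) * emeasure (D1 \<Otimes>\<^sub>M D2) ({G k..} \<times> {G k..}) = ennreal (G k * m1 k * m2 k)" for k
        using D1(2) D2(2) G0[of k] m1b m2b
        by (simp add: P2.emeasure_pair_measure_Times P1.emeasure_eq_measure P2.emeasure_eq_measure
              m1_def m2_def ennreal_mult[symmetric] mult.assoc)
      moreover have "ennreal \<delta> * ennreal (G k * m1 k * m2 k) = ennreal (\<delta> * G k * m1 k * m2 k)" for k
        using \<delta> G0[of k] m1b(1)[of k] m2b(1)[of k] by (subst ennreal_mult[symmetric]) (auto simp: mult.assoc)
      ultimately show ?thesis by (simp flip: ennreal_suminf_cmult)
    qed
    also have "\<dots> \<le> ennreal g + ennreal (\<rho>^2 * (2 * s))"
    proof -
      have "(\<Sum>k. ennreal (\<delta> * G k * m1 k * m2 k)) \<le> ennreal (\<rho>^2 * (2 * s))"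
      proof (subst suminf_eq_SUP, rule SUP_least)
        fix n
        have "(\<Sum>k<n. ennreal (\<delta> * G k * m1 k * m2 k)) \<le> (\<Sum>k<n. ennreal (\<rho>^2 * (\<Phi> (G (Suc k)) - \<Phi> (G k))))"
          using step by (intro sum_mono ennreal_leI)
        also have "\<dots> = ennreal (\<Sum>k<n. \<rho>^2 * (\<Phi> (G (Suc k)) - \<Phi> (G k)))"
          using step0 by simp
        also have "(\<Sum>k<n. \<rho>^2 * (\<Phi> (G (Suc k)) - \<Phi> (G k))) = \<rho>^2 * (\<Phi> (G n) - \<Phi> (G 0))"
          by (simp add: sum_distrib_left[symmetric] sum_lessThan_telescope[of "\<lambda>k. \<Phi> (G k)"])
        also have "\<dots> \<le> \<rho>^2 * (2 * s)"
          using Phib[of "G n"] Phib[of "G 0"] G0[of n] G0[of 0] by (intro mult_left_mono) auto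
        finally show "(\<Sum>k<n. ennreal (\<delta> * G k * m1 k * m2 k)) \<le> ennreal (\<rho>^2 * (2 * s))"
          by (simp add: ennreal_leI)
      qed
      thus ?thesis by (rule add_left_mono)
    qed
    also have "\<dots> \<le> ennreal (2 * sqrt (r1 * r2)) + ennreal e"
    proof -
      have "\<rho>^2 = 1 + \<delta> * (2 + \<delta>)" by (simp add: \<rho>_def power2_eq_square algebra_simps)
      hence "\<rho>^2 * (2 * s) = 2 * s + \<delta> * (2 + \<delta>) * (2 * s)" by (simp add: algebra_simps)
      moreover have "\<delta> * (2 + \<delta>) * (2 * s) \<le> e / 2"
      proof -
        have "\<delta> * (2 + \<delta>) * (2 * s) \<le> \<delta> * 3 * (2 * s)" using \<delta> s0 by (intro mult_right_mono mult_left_mono) auto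
        also have "\<dots> = 6 * s * \<delta>" by simp
        also have "\<dots> \<le> 6 * s * (e / (12 * (s + 1)))" using s0 by (intro mult_left_mono) (auto simp: \<delta>_def)
        also have "\<dots> = (e / 2) * (s / (s + 1))" using s0 by (simp add: field_simps)
        also have "\<dots> \<le> e / 2" using e s0 by (intro mult_left_le) auto
        finally show ?thesis .
      qed
      ultimately have "g + \<rho>^2 * (2 * s) \<le> 2 * sqrt (r1 * r2) + e" by (simp add: g_def s_def)
      hence "ennreal (g + \<rho>^2 * (2 * s)) \<le> ennreal (2 * sqrt (r1 * r2) + e)" by (rule ennreal_leI)
      thus ?thesis using g s0 e \<rho> by (simp add: ennreal_plus s_def)
    qed
    finally show "(\<integral>\<^sup>+ x. ennreal (min (fst x) (snd x)) \<partial>(D1 \<Otimes>\<^sub>M D2)) \<le> ennreal (2 * sqrt (r1 * r2)) + ennreal e" .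
  qed
qed



theorem proposition7:
  fixes M :: "'a measure" and X1 X2 :: "'a \<Rightarrow> real" and r1 r2 :: real
  assumes "prob_space M"
    and "X1 \<in> borel_measurable M" and "X2 \<in> borel_measurable M"
    and "\<And>w. w \<in> space M \<Longrightarrow> X1 w \<ge> 0"
    and "\<And>w. w \<in> space M \<Longrightarrow> X2 w \<ge> 0"
    and "prob_space.indep_var M borel X1 borel X2"
    and "Rev1 M X1 = ereal r1" and "Rev1 M X2 = ereal r2"
  shows "Rev2 M X1 X2 \<le> ereal ((sqrt r1 + sqrt r2)\<^sup>2)"
proof -
  interpret prob_space M by fact
  note [measurable] = assms(2,3)
  define D1 where "D1 = distr M borel X1"
  define D2 where "D2 = distr M borel X2"
  have PD1: "prob_space D1" unfolding D1_def by (rule prob_space_distr) simp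
  have PD2: "prob_space D2" unfolding D2_def by (rule prob_space_distr) simp
  interpret P1: prob_space D1 by fact
  interpret P2: prob_space D2 by fact
  interpret P12: pair_sigma_finite D1 D2 by unfold_locales
  have sD1: "sets D1 = sets borel" and sD2: "sets D2 = sets borel" by (simp_all add: D1_def D2_def)
  have tail1: "y * measure D1 {y..} \<le> r1" if "0 \<le> y" for y
  proof -
    have "ereal (y * measure M {w \<in> space M. X1 w \<ge> y}) \<le> Rev1 M X1"
      unfolding Rev1_def using that by (intro SUP_upper) auto
    moreover have "measure D1 {y..} = measure M {w \<in> space M. X1 w \<ge> y}"
      unfolding D1_def by (subst measure_distr) (auto intro!: arg_cong[where f="measure M"])
    ultimately show ?thesis using assms(7) by simp
  qed
  have tail2: "y * measure D2 {y..} \<le> r2" if "0 \<le> y" for y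
  proof -
    have "ereal (y * measure M {w \<in> space M. X2 w \<ge> y}) \<le> Rev1 M X2"
      unfolding Rev1_def using that by (intro SUP_upper) auto
    moreover have "measure D2 {y..} = measure M {w \<in> space M. X2 w \<ge> y}"
      unfolding D2_def by (subst measure_distr) (auto intro!: arg_cong[where f="measure M"])
    ultimately show ?thesis using assms(8) by simp
  qed
  have r10: "0 \<le> r1" using tail1[of 0] by simp
  have r20: "0 \<le> r2" using tail2[of 0] by simp
  have ae1: "AE x in D1. 0 \<le> x" unfolding D1_def using assms(4) by (subst AE_distr_iff) auto
  have ae2: "AE x in D2. 0 \<le> x" unfolding D2_def using assms(5) by (subst AE_distr_iff) auto
  have joint: "distr M (borel \<Otimes>\<^sub>M borel) (\<lambda>w. (X1 w, X2 w)) = D1 \<Otimes>\<^sub>M D2"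
    using assms(6) unfolding indep_var_distribution_eq D1_def D2_def by simp
  define bnd where "bnd = (sqrt r1 + sqrt r2)\<^sup>2"
  have bnd_eq: "bnd = r1 + r2 + 2 * sqrt (r1 * r2)"
    using r10 r20 by (simp add: bnd_def power2_eq_square algebra_simps real_sqrt_mult)
  have bnd0: "0 \<le> bnd" by (simp add: bnd_def)
  show ?thesis unfolding Rev2_def bnd_def[symmetric]
  proof (rule SUP_least)
    fix qs assume "qs \<in> {(q, s). IC_IR_mechanism q s}"
    then obtain q s where qs: "qs = (q, s)" and m: "IC_IR_mechanism q s" by auto
    have qm[measurable]: "q \<in> borel \<Otimes>\<^sub>M borel \<rightarrow>\<^sub>M borel \<Otimes>\<^sub>M borel" and sm[measurable]: "s \<in> borel_measurable (borel \<Otimes>\<^sub>M borel)"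
      using m unfolding IC_IR_mechanism_def by (simp_all add: borel_prod)
    have z1[measurable]: "(\<lambda>x::real \<times> real. (0::real, snd x)) \<in> borel \<Otimes>\<^sub>M borel \<rightarrow>\<^sub>M borel \<Otimes>\<^sub>M borel"
      by (intro measurable_Pair) auto
    have z2[measurable]: "(\<lambda>x::real \<times> real. (fst x, 0::real)) \<in> borel \<Otimes>\<^sub>M borel \<rightarrow>\<^sub>M borel \<Otimes>\<^sub>M borel"
      by (intro measurable_Pair) auto
    have P1m[measurable]: "P1 q s \<in> borel_measurable (borel \<Otimes>\<^sub>M borel)"
      unfolding P1_def[abs_def] Bu_def dot2_def
      by (intro borel_measurable_diff borel_measurable_add borel_measurable_times measurable_compose[OF z1 sm]
          measurable_compose[OF z1 qm] measurable_compose[OF qm] measurable_compose[OF z1] sm) auto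
    have P2m[measurable]: "P2 q s \<in> borel_measurable (borel \<Otimes>\<^sub>M borel)"
      unfolding P2_def[abs_def] Bu_def dot2_def
      by (intro borel_measurable_diff borel_measurable_add borel_measurable_times measurable_compose[OF z2 sm]
          measurable_compose[OF z2 qm] measurable_compose[OF qm] measurable_compose[OF z2] sm) auto
    define F where "F x = ennreal (P1 q s x) + ennreal (P2 q s x) + ennreal (min (fst x) (snd x))" for x
    have Fm[measurable]: "F \<in> borel_measurable (borel \<Otimes>\<^sub>M borel)" unfolding F_def[abs_def] by measurable
    have "(\<integral>\<^sup>+ w. ennreal (s (X1 w, X2 w)) \<partial>M) \<le> (\<integral>\<^sup>+ w. F (X1 w, X2 w) \<partial>M)"
    proof (rule nn_integral_mono)
      fix w assume w: "w \<in> space M"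
      have a: "0 \<le> X1 w" and c: "0 \<le> X2 w" using w assms(4,5) by auto
      note mp = mech_pointwise[OF m a c]
      have "ennreal (s (X1 w, X2 w)) \<le> ennreal (P1 q s (X1 w, X2 w) + P2 q s (X1 w, X2 w) + min (X1 w) (X2 w))"
        using mp(1) by (rule ennreal_leI)
      also have "\<dots> = F (X1 w, X2 w)" using mp a c by (simp add: F_def ennreal_plus)
      finally show "ennreal (s (X1 w, X2 w)) \<le> F (X1 w, X2 w)" .
    qed
    also have "\<dots> = (\<integral>\<^sup>+ x. F x \<partial>(D1 \<Otimes>\<^sub>M D2))"
      unfolding joint[symmetric] by (subst nn_integral_distr) auto
    also have "\<dots> = (\<integral>\<^sup>+ x. ennreal (P1 q s x) \<partial>(D1 \<Otimes>\<^sub>M D2)) + (\<integral>\<^sup>+ x. ennreal (P2 q s x) \<partial>(D1 \<Otimes>\<^sub>M D2))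
        + (\<integral>\<^sup>+ x. ennreal (min (fst x) (snd x)) \<partial>(D1 \<Otimes>\<^sub>M D2))"
      unfolding F_def using sD1 sD2 by (simp add: nn_integral_add measurable_cong_sets[OF sets_pair_measure_cong[OF sD1 sD2] refl])
    also have "\<dots> \<le> ennreal r1 + ennreal r2 + ennreal (2 * sqrt (r1 * r2))"
    proof (intro add_mono)
      have "(\<integral>\<^sup>+ x. ennreal (P1 q s x) \<partial>(D1 \<Otimes>\<^sub>M D2)) = (\<integral>\<^sup>+ y. (\<integral>\<^sup>+ x. ennreal (P1 q s (x, y)) \<partial>D1) \<partial>D2)"
        by (rule P12.nn_integral_snd[symmetric]) (simp add: measurable_cong_sets[OF sets_pair_measure_cong[OF sD1 sD2] refl])
      also have "\<dots> \<le> (\<integral>\<^sup>+ y. ennreal r1 \<partial>D2)"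
      proof (rule nn_integral_mono_AE)
        show "AE y in D2. (\<integral>\<^sup>+ x. ennreal (P1 q s (x, y)) \<partial>D1) \<le> ennreal r1"
          using ae2
        proof eventually_elim
          case (elim c)
          show ?case
            by (rule L1[OF PD1 sD1 ae1 tail1, where q="\<lambda>y. fst (q (y, c))"])
               (use mech_1d[OF m _ _ elim] mech_q[OF m] mech_pointwise(3)[OF m _ elim] elim in auto)
        qed
      qed
      also have "\<dots> = ennreal r1" by (simp add: P2.emeasure_space_1)
      finally show "(\<integral>\<^sup>+ x. ennreal (P1 q s x) \<partial>(D1 \<Otimes>\<^sub>M D2)) \<le> ennreal r1" .
    next
      have "(\<integral>\<^sup>+ x. ennreal (P2 q s x) \<partial>(D1 \<Otimes>\<^sub>M D2)) = (\<integral>\<^sup>+ x. (\<integral>\<^sup>+ y. ennreal (P2 q s (x, y)) \<partial>D2) \<partial>D1)"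
        by (rule P2.nn_integral_fst[of "\<lambda>x. ennreal (P2 q s x)", symmetric]) (simp add: measurable_cong_sets[OF sets_pair_measure_cong[OF sD1 sD2] refl])
      also have "\<dots> \<le> (\<integral>\<^sup>+ x. ennreal r2 \<partial>D1)"
      proof (rule nn_integral_mono_AE)
        show "AE x in D1. (\<integral>\<^sup>+ y. ennreal (P2 q s (x, y)) \<partial>D2) \<le> ennreal r2"
          using ae1
        proof eventually_elim
          case (elim c)
          show ?case
            by (rule L1[OF PD2 sD2 ae2 tail2, where q="\<lambda>y. snd (q (c, y))"])
               (use mech_1d[OF m _ _ elim] mech_q[OF m] mech_pointwise(5)[OF m elim] elim in auto)
        qed
      qed
      also have "\<dots> = ennreal r2" by (simp add: P1.emeasure_space_1)
      finally show "(\<integral>\<^sup>+ x. ennreal (P2 q s x) \<partial>(D1 \<Otimes>\<^sub>M D2)) \<le> ennreal r2" .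
    next
      show "(\<integral>\<^sup>+ x. ennreal (min (fst x) (snd x)) \<partial>(D1 \<Otimes>\<^sub>M D2)) \<le> ennreal (2 * sqrt (r1 * r2))"
        by (rule L2[OF PD1 sD1 PD2 sD2 tail1 tail2])
    qed
    also have "\<dots> = ennreal bnd" using r10 r20 by (simp add: bnd_eq ennreal_plus)
    finally have A: "(\<integral>\<^sup>+ w. ennreal (s (X1 w, X2 w)) \<partial>M) \<le> ennreal bnd" .
    have "ext_expectation M (\<lambda>w. snd qs (X1 w, X2 w)) \<le> enn2ereal (\<integral>\<^sup>+ w. ennreal (s (X1 w, X2 w)) \<partial>M)"
      unfolding ext_expectation_def qs by (simp add: ereal_diff_le_self)
    also have "\<dots> \<le> enn2ereal (ennreal bnd)" using A by (simp add: less_eq_ennreal.rep_eq)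
    also have "\<dots> = ereal bnd" using bnd0 by simp
    finally show "ext_expectation M (\<lambda>w. snd qs (X1 w, X2 w)) \<le> ereal bnd" .
  qed
qed


end
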